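(* Let $n>2$, $1<k<n$, $G=H_B(n,k)$. For $1\le i\le j\le n-1$ let $P_{i,j}$ be the number of unordered pairs $\{u,v\}$ with $u$ an $i$-vertex of $V_2$, $v$ a $j$-vertex of $V_2$, and $d(u,v)=4$. Then the number of unordered pairs of vertices of $V_2$ at distance $4$ is $$d^{(4)}_{V_2}=\sum_{\substack{1\le i\le j\le n-1\\ k+1\le i+j\le n+k-1}}P_{i,j},$$ where, with all sums over integers $t$ (representing $|u^\dagger\cap v^\dagger|$) satisfying $t\ge 0$, $i+j-n\le t<i+j-k$ and $t<\min\{i,k\}$: - if $i\ne k$, $j\ne k$, $i<j$: $P_{i,j}=\sum_t\binom{n}{i}2^{i-1}2^{j-1}\binom{n-i}{j-t}\binom{i}{t}$; - if $i=k<j$: $P_{i,j}=\sum_t\binom{n}{k}(2^{k-1}-1)2^{j-1}\binom{n-k}{j-t}\binom{k}{t}$; - if $i<j=k$: $P_{i,j}=\sum_t\binom{n}{i}2^{i-1}(2^{k-1}-1)\binom{n-i}{k-t}\binom{i}{t}$; - if $i=j=k$: $P_{i,j}=\frac12\sum_t\binom{n}{k}(2^{k-1}-1)^2\binom{n-k}{k-t}\binom{k}{t}$; - if $i=j\ne k$: $P_{i,j}=\frac12\sum_t\binom{n}{i}2^{2(i-1)}\binom{n-i}{i-t}\binom{i}{t}$.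
   Context: Fix integers $n\ge 2$ and $1\le k<n$ and positive real numbers $x_1<x_2<\dots<x_n$. Let $\mathscr{B}_n=\{\pm x_1,\pm x_2,\dots,\pm x_{n-1},x_n\}$ (so $-x_n\notin\mathscr{B}_n$). Let $\phi(\mathscr{B}_n)$ be the family of all nonempty subsets $S\subseteq\mathscr{B}_n$ whose elements have pairwise distinct absolute values and whose element of largest absolute value is positive. Let $\mathscr{B}_n^+=\{x_1,\dots,x_n\}$, let $V_1$ be the set of all $k$-element subsets of $\mathscr{B}_n^+$, and let $V_2=\phi(\mathscr{B}_n)\setminus V_1$. For $A\in\phi(\mathscr{B}_n)$ put $A^\dagger=\{|a|:a\in A\}$. The bipartite Kneser B type-$k$ graph $H_B(n,k)$ is the simple graph with vertex set $V_1\cup V_2$ in which $X\in V_1$ and $Y\in V_2$ are adjacent if and only if $X\subseteq Y^\dagger$ or $Y^\dagger\subseteq X$, and there are no other edges. An $r$-vertex is a vertex having exactly $r$ elements. $d(u,v)$ denotes graph distance. *)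

theory Defs
  imports Complex_Main
begin

definition Bn :: "(nat \<Rightarrow> real) \<Rightarrow> nat \<Rightarrow> real set" where
  "Bn x n = {x i | i. 1 \<le> i \<and> i \<le> n - 1} \<union> {- x i | i. 1 \<le> i \<and> i \<le> n - 1} \<union> {x n}"

definition phi :: "real set \<Rightarrow> real set set" where
  "phi B = {S. S \<noteq> {} \<and> S \<subseteq> B \<and> inj_on abs S \<and>
                (\<forall>a\<in>S. (\<forall>b\<in>S. \<bar>b\<bar> \<le> \<bar>a\<bar>) \<longrightarrow> a > 0)}"

definition Bplus :: "(nat \<Rightarrow> real) \<Rightarrow> nat \<Rightarrow> real set" where
  "Bplus x n = {x i | i. 1 \<le> i \<and> i \<le> n}"

definition V1 :: "(nat \<Rightarrow> real) \<Rightarrow> nat \<Rightarrow> nat \<Rightarrow> real set set" where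
  "V1 x n k = {X. X \<subseteq> Bplus x n \<and> card X = k}"

definition V2 :: "(nat \<Rightarrow> real) \<Rightarrow> nat \<Rightarrow> nat \<Rightarrow> real set set" where
  "V2 x n k = phi (Bn x n) - V1 x n k"

definition dagger :: "real set \<Rightarrow> real set" where
  "dagger A = abs ` A"

definition HB_verts :: "(nat \<Rightarrow> real) \<Rightarrow> nat \<Rightarrow> nat \<Rightarrow> real set set" where
  "HB_verts x n k = V1 x n k \<union> V2 x n k"

definition HB_adj :: "(nat \<Rightarrow> real) \<Rightarrow> nat \<Rightarrow> nat \<Rightarrow> real set \<Rightarrow> real set \<Rightarrow> bool" where
  "HB_adj x n k A B \<longleftrightarrow>
     (A \<in> V1 x n k \<and> B \<in> V2 x n k \<and> (A \<subseteq> dagger B \<or> dagger B \<subseteq> A)) \<or>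
     (B \<in> V1 x n k \<and> A \<in> V2 x n k \<and> (B \<subseteq> dagger A \<or> dagger A \<subseteq> B))"

definition has_walk :: "'a set \<Rightarrow> ('a \<Rightarrow> 'a \<Rightarrow> bool) \<Rightarrow> 'a \<Rightarrow> 'a \<Rightarrow> nat \<Rightarrow> bool" where
  "has_walk V E u v m \<longleftrightarrow>
     (\<exists>p::nat \<Rightarrow> 'a. p 0 = u \<and> p m = v \<and> (\<forall>i\<le>m. p i \<in> V) \<and> (\<forall>i<m. E (p i) (p (Suc i))))"

definition dist_is :: "'a set \<Rightarrow> ('a \<Rightarrow> 'a \<Rightarrow> bool) \<Rightarrow> 'a \<Rightarrow> 'a \<Rightarrow> nat \<Rightarrow> bool" where
  "dist_is V E u v m \<longleftrightarrow> has_walk V E u v m \<and> (\<forall>l<m. \<not> has_walk V E u v l)"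

definition HB_dist_is :: "(nat \<Rightarrow> real) \<Rightarrow> nat \<Rightarrow> nat \<Rightarrow> real set \<Rightarrow> real set \<Rightarrow> nat \<Rightarrow> bool" where
  "HB_dist_is x n k u v m = dist_is (HB_verts x n k) (HB_adj x n k) u v m"

definition Pcount :: "(nat \<Rightarrow> real) \<Rightarrow> nat \<Rightarrow> nat \<Rightarrow> nat \<Rightarrow> nat \<Rightarrow> nat" where
  "Pcount x n k i j = card {{u, v} | u v. u \<in> V2 x n k \<and> v \<in> V2 x n k \<and>
       card u = i \<and> card v = j \<and> HB_dist_is x n k u v 4}"

definition d4_V2 :: "(nat \<Rightarrow> real) \<Rightarrow> nat \<Rightarrow> nat \<Rightarrow> nat" where
  "d4_V2 x n k = card {{u, v} | u v. u \<in> V2 x n k \<and> v \<in> V2 x n k \<and> HB_dist_is x n k u v 4}"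

definition Tset :: "nat \<Rightarrow> nat \<Rightarrow> nat \<Rightarrow> nat \<Rightarrow> nat set" where
  "Tset n k i j = {t. int i + int j - int n \<le> int t \<and> int t < int i + int j - int k \<and> t < min i k}"

end

theory Submission
  imports Defs
begin


locale hb =
  fixes x :: "nat \<Rightarrow> real" and n k :: nat
  assumes n2: "n > 2" and k1: "1 < k" and kn: "k < n"
    and pos: "\<forall>i. 1 \<le> i \<and> i \<le> n \<longrightarrow> 0 < x i"
    and mono: "\<forall>i j. 1 \<le> i \<and> i < j \<and> j \<le> n \<longrightarrow> x i < x j"
begin

abbreviation "P \<equiv> Bplus x n"

lemma P_eq: "P = x ` {1..n}"
  unfolding Bplus_def by auto

lemma x_inj: "inj_on x {1..n}"
proof (rule inj_onI)
  fix a b assume a: "a \<in> {1..n}" and b: "b \<in> {1..n}" and e: "x a = x b"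
  show "a = b"
  proof (rule ccontr)
    assume "a \<noteq> b"
    then have "a < b \<or> b < a" by arith
    then show False using mono[rule_format, of a b] mono[rule_format, of b a] a b e by auto
  qed
qed

lemma finP: "finite P" by (simp add: P_eq)
lemma cardP: "card P = n" using x_inj by (simp add: P_eq card_image)

lemma Ppos: "p \<in> P \<Longrightarrow> p > 0"
  using pos unfolding Bplus_def by auto

lemma xnP: "x n \<in> P" using n2 unfolding Bplus_def by auto

lemma xn_max: "p \<in> P \<Longrightarrow> p \<le> x n"
proof -
  assume "p \<in> P"
  then obtain i where i: "1 \<le> i" "i \<le> n" "p = x i" unfolding Bplus_def by auto
  show "p \<le> x n"
  proof (cases "i = n")
    case False
    then show ?thesis using mono[rule_format, of i n] i by auto
  qed (use i in simp)
qed

lemma Bn_eq: "Bn x n = P \<union> uminus ` (P - {x n})"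
proof
  show "Bn x n \<subseteq> P \<union> uminus ` (P - {x n})"
  proof
    fix a assume "a \<in> Bn x n"
    then consider (p) i where "1 \<le> i" "i \<le> n - 1" "a = x i"
      | (m) i where "1 \<le> i" "i \<le> n - 1" "a = - x i" | (n) "a = x n"
      unfolding Bn_def by blast
    then show "a \<in> P \<union> uminus ` (P - {x n})"
    proof cases
      case p then show ?thesis unfolding Bplus_def by auto
    next
      case (m i)
      have "x i < x n" using mono[rule_format, of i n] m n2 by auto
      moreover have "x i \<in> P" using m unfolding Bplus_def by auto
      ultimately show ?thesis using m by auto
    next
      case n then show ?thesis using xnP by auto
    qed
  qed
next
  show "P \<union> uminus ` (P - {x n}) \<subseteq> Bn x n"
  proof
    fix a assume "a \<in> P \<union> uminus ` (P - {x n})"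
    then consider "a \<in> P" | q where "q \<in> P" "q \<noteq> x n" "a = - q" by blast
    then show "a \<in> Bn x n"
    proof cases
      case 1
      then obtain i where i: "1 \<le> i" "i \<le> n" "a = x i" unfolding Bplus_def by auto
      show ?thesis
      proof (cases "i = n")
        case True then show ?thesis using i unfolding Bn_def by auto
      next
        case False then have "i \<le> n - 1" using i by auto
        then show ?thesis using i unfolding Bn_def by blast
      qed
    next
      case 2
      then obtain i where i: "1 \<le> i" "i \<le> n" "q = x i" unfolding Bplus_def by auto
      then have "i \<noteq> n" using 2 by auto
      then have "i \<le> n - 1" using i by auto
      then show ?thesis using i 2 unfolding Bn_def by blast
    qed
  qed
qed

lemma finBn: "finite (Bn x n)" by (simp add: Bn_eq finP)

lemma abs_Bn: "a \<in> Bn x n \<Longrightarrow> \<bar>a\<bar> \<in> P"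
proof -
  assume "a \<in> Bn x n"
  then consider "a \<in> P" | q where "q \<in> P" "a = - q" unfolding Bn_eq by blast
  then show ?thesis
  proof cases
    case 1 then show ?thesis using Ppos[of a] by simp
  next
    case 2 then show ?thesis using Ppos[of q] by simp
  qed
qed

lemma phi_props:
  assumes "u \<in> phi (Bn x n)"
  shows "finite u" "dagger u \<subseteq> P" "dagger u \<noteq> {}" "card (dagger u) = card u" "u \<subseteq> Bn x n"
proof -
  have s: "u \<subseteq> Bn x n" "u \<noteq> {}" "inj_on abs u" using assms unfolding phi_def by auto
  show "finite u" using s finBn finite_subset by blast
  show "dagger u \<subseteq> P" using s abs_Bn unfolding dagger_def by auto
  show "dagger u \<noteq> {}" using s unfolding dagger_def by auto
  show "card (dagger u) = card u" using s unfolding dagger_def by (simp add: card_image)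
  show "u \<subseteq> Bn x n" using s by auto
qed


lemma absP: "p \<in> P \<Longrightarrow> \<bar>p\<bar> = p" using Ppos by force
lemma absmP: "p \<in> P \<Longrightarrow> \<bar>-p\<bar> = p" using Ppos by force

lemma fibre_phi:
  assumes BP: "B \<subseteq> P" and Bne: "B \<noteq> {}"
  shows "card {u \<in> phi (Bn x n). dagger u = B} = 2 ^ (card B - 1)"
proof -
  have finB: "finite B" using BP finP finite_subset by blast
  define m where "m = Max B"
  have mB: "m \<in> B" using finB Bne m_def by simp
  have mmax: "\<And>b. b \<in> B \<Longrightarrow> b \<le> m" using finB m_def by simp
  have Bpos: "\<And>b. b \<in> B \<Longrightarrow> b > 0" using BP Ppos by blast
  have Babs: "\<And>b. b \<in> B \<Longrightarrow> \<bar>b\<bar> = b" using Bpos by force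
  have Babsm: "\<And>b. b \<in> B \<Longrightarrow> \<bar>-b\<bar> = b" using Bpos by force
  define f where "f N = (B - N) \<union> uminus ` N" for N
  define g where "g u = {b \<in> B. - b \<in> u}" for u
  let ?T = "{u \<in> phi (Bn x n). dagger u = B}"
  have gf: "g (f N) = N" if N: "N \<in> Pow (B - {m})" for N
  proof -
    have "- b \<notin> B" if "b \<in> B" for b
    proof
      assume "- b \<in> B"
      then show False using Bpos[of b] Bpos[of "-b"] that by linarith
    qed
    then show ?thesis using N unfolding g_def f_def by auto
  qed
  have fT: "f N \<in> ?T" if N: "N \<in> Pow (B - {m})" for N
  proof -
    have NB: "N \<subseteq> B" "m \<notin> N" using N by auto
    have ne: "f N \<noteq> {}" using mB NB unfolding f_def by auto
    have sub: "f N \<subseteq> Bn x n"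
    proof
      fix a assume "a \<in> f N"
      then consider "a \<in> B" | q where "q \<in> N" "a = - q" unfolding f_def by auto
      then show "a \<in> Bn x n"
      proof cases
        case 1 then show ?thesis using BP Bn_eq by auto
      next
        case 2
        have qP: "q \<in> P" using 2 NB BP by auto
        have "q \<noteq> x n"
        proof
          assume "q = x n"
          then have "m \<le> q" using mB BP xn_max by auto
          moreover have "q \<le> m" using 2 NB mmax by auto
          ultimately show False using 2 NB by auto
        qed
        then show ?thesis using qP 2 Bn_eq by auto
      qed
    qed
    have inj: "inj_on abs (f N)"
    proof (rule inj_onI)
      fix a b assume a: "a \<in> f N" and b: "b \<in> f N" and e: "\<bar>a\<bar> = \<bar>b\<bar>"
      from a consider "a \<in> B - N" | q where "q \<in> N" "a = - q" unfolding f_def by auto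
      then show "a = b"
      proof cases
        case 1
        from b consider "b \<in> B - N" | q where "q \<in> N" "b = - q" unfolding f_def by auto
        then show ?thesis
        proof cases
          case 1 then show ?thesis using \<open>a \<in> B - N\<close> e Babs by auto
        next
          case (2 q) then show ?thesis using \<open>a \<in> B - N\<close> e Babs[of a] Babsm[of q] NB by auto
        qed
      next
        case (2 q)
        from b consider "b \<in> B - N" | q' where "q' \<in> N" "b = - q'" unfolding f_def by auto
        then show ?thesis
        proof cases
          case 1 then show ?thesis using 2 e Babs[of b] Babsm[of q] NB by auto
        next
          case (2 q') then show ?thesis using \<open>q \<in> N\<close> \<open>a = - q\<close> e Babsm[of q] Babsm[of q'] NB by auto
        qed
      qed
    qed
    have mx: "a > 0" if a: "a \<in> f N" and amax: "\<forall>b\<in>f N. \<bar>b\<bar> \<le> \<bar>a\<bar>" for a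
    proof -
      have "m \<in> f N" using mB NB unfolding f_def by auto
      then have ma: "m \<le> \<bar>a\<bar>" using amax Babs[OF mB] by force
      from a consider "a \<in> B - N" | q where "q \<in> N" "a = - q" unfolding f_def by auto
      then show ?thesis
      proof cases
        case 1 then show ?thesis using Bpos by auto
      next
        case 2
        then have "\<bar>a\<bar> = q" using Babsm NB by auto
        then have "q = m" using ma mmax[of q] 2 NB by auto
        then show ?thesis using 2 NB by auto
      qed
    qed
    have dg: "dagger (f N) = B"
    proof -
      have "dagger (f N) = abs ` (B - N) \<union> abs ` (uminus ` N)" unfolding dagger_def f_def by auto
      also have "abs ` (B - N) = B - N" using Babs by force
      also have "abs ` (uminus ` N) = N"
      proof -
        have "abs ` (uminus ` N) = (\<lambda>q. \<bar>-q\<bar>) ` N" by (simp add: image_image)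
        also have "\<dots> = N" using Babsm NB by force
        finally show ?thesis .
      qed
      finally show ?thesis using NB by auto
    qed
    show ?thesis using ne sub inj mx dg unfolding phi_def by auto
  qed
  have fg: "f (g u) = u" and gP: "g u \<in> Pow (B - {m})" if u: "u \<in> ?T" for u
  proof -
    have up: "u \<in> phi (Bn x n)" "dagger u = B" using u by auto
    have injA: "inj_on abs u" and mxu: "\<forall>a\<in>u. (\<forall>b\<in>u. \<bar>b\<bar> \<le> \<bar>a\<bar>) \<longrightarrow> a > 0"
      using up unfolding phi_def by auto
    have inB: "\<And>a. a \<in> u \<Longrightarrow> \<bar>a\<bar> \<in> B" using up unfolding dagger_def by auto
    show "f (g u) = u"
    proof
      show "f (g u) \<subseteq> u"
      proof
        fix a assume "a \<in> f (g u)"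
        then consider "a \<in> B" "a \<notin> g u" | q where "q \<in> g u" "a = - q" unfolding f_def by auto
        then show "a \<in> u"
        proof cases
          case 1
          then obtain c where c: "c \<in> u" "\<bar>c\<bar> = a" using up unfolding dagger_def by auto
          have "c = a \<or> c = - a" using c by auto
          then show ?thesis using c 1 unfolding g_def by auto
        next
          case 2 then show ?thesis unfolding g_def by auto
        qed
      qed
    next
      show "u \<subseteq> f (g u)"
      proof
        fix a assume a: "a \<in> u"
        have aB: "\<bar>a\<bar> \<in> B" using inB a .
        show "a \<in> f (g u)"
        proof (cases "a \<ge> 0")
          case True
          then have "a \<in> B" using aB by auto
          moreover have "- a \<notin> u"
          proof
            assume "- a \<in> u"
            then have "- a = a" using inj_onD[OF injA, of "-a" a] a by simp
            then show False using aB Bpos[of 0] by auto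
          qed
          ultimately show ?thesis unfolding f_def g_def by auto
        next
          case False
          then have "a = - \<bar>a\<bar>" by auto
          then have "\<bar>a\<bar> \<in> g u" using aB a unfolding g_def by auto
          then show ?thesis using \<open>a = - \<bar>a\<bar>\<close> unfolding f_def by (metis UnI2 image_eqI)
        qed
      qed
    qed
    have "m \<notin> g u"
    proof
      assume "m \<in> g u"
      then have mu: "- m \<in> u" unfolding g_def by auto
      have "\<forall>b\<in>u. \<bar>b\<bar> \<le> \<bar>- m\<bar>" using inB mmax Babsm[OF mB] by auto
      then have "- m > 0" using mxu mu by blast
      then show False using Bpos[OF mB] by auto
    qed
    then show "g u \<in> Pow (B - {m})" unfolding g_def by auto
  qed
  have bij: "bij_betw f (Pow (B - {m})) ?T"
  proof (rule bij_betw_byWitness[where f'=g])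
    show "\<forall>a\<in>Pow (B - {m}). g (f a) = a" using gf by blast
    show "\<forall>a'\<in>?T. f (g a') = a'" using fg by blast
    show "f ` Pow (B - {m}) \<subseteq> ?T" using fT by blast
    show "g ` ?T \<subseteq> Pow (B - {m})" using gP by blast
  qed
  have "card ?T = card (Pow (B - {m}))" using bij bij_betw_same_card by metis
  also have "\<dots> = 2 ^ card (B - {m})" using finB by (simp add: card_Pow)
  also have "card (B - {m}) = card B - 1" using mB finB by simp
  finally show ?thesis .
qed

end



lemma subset_between:
  assumes "finite S" "A \<subseteq> S" "card A \<le> m" "m \<le> card S"
  shows "\<exists>X. A \<subseteq> X \<and> X \<subseteq> S \<and> card X = m"
proof -
  have fA: "finite A" using assms finite_subset by blast
  have "card (S - A) = card S - card A" using assms fA by (simp add: card_Diff_subset)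
  then have mc: "m - card A \<le> card (S - A)" using assms by linarith
  obtain T where T: "T \<subseteq> S - A" "card T = m - card A" "finite T"
    using obtain_subset_with_card_n[OF mc] by blast
  have "card (A \<union> T) = card A + card T" using T fA by (subst card_Un_disjoint) auto
  then show ?thesis using T assms by (intro exI[of _ "A \<union> T"]) auto
qed

lemma comb_nbr:
  fixes A B S :: "'a set" and k :: nat
  assumes fS: "finite S" and AS: "A \<subseteq> S" and BS: "B \<subseteq> S" and kS: "k \<le> card S"
  shows "(\<exists>X. X \<subseteq> S \<and> card X = k \<and> (X \<subseteq> A \<or> A \<subseteq> X) \<and> (X \<subseteq> B \<or> B \<subseteq> X))
     \<longleftrightarrow> \<not> (card (A \<inter> B) < k \<and> k < card (A \<union> B) \<and> card (A \<inter> B) < card A \<and> card (A \<inter> B) < card B)"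
proof -
  have fA: "finite A" and fB: "finite B" using AS BS fS finite_subset by blast+
  show ?thesis
  proof
    assume "\<exists>X. X \<subseteq> S \<and> card X = k \<and> (X \<subseteq> A \<or> A \<subseteq> X) \<and> (X \<subseteq> B \<or> B \<subseteq> X)"
    then obtain X where X: "X \<subseteq> S" "card X = k" "X \<subseteq> A \<or> A \<subseteq> X" "X \<subseteq> B \<or> B \<subseteq> X" by blast
    have fX: "finite X" using X fS finite_subset by blast
    show "\<not> (card (A \<inter> B) < k \<and> k < card (A \<union> B) \<and> card (A \<inter> B) < card A \<and> card (A \<inter> B) < card B)"
    proof (intro notI, elim conjE)
      assume c: "card (A \<inter> B) < k" "k < card (A \<union> B)" "card (A \<inter> B) < card A" "card (A \<inter> B) < card B"
      consider "X \<subseteq> A" "X \<subseteq> B" | "A \<subseteq> X" "B \<subseteq> X" | "X \<subseteq> A" "B \<subseteq> X" | "A \<subseteq> X" "X \<subseteq> B"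
        using X by blast
      then show False
      proof cases
        case 1 then have "card X \<le> card (A \<inter> B)" using fA by (intro card_mono) auto
        then show ?thesis using c X by linarith
      next
        case 2 then have "card (A \<union> B) \<le> card X" using fX by (intro card_mono) auto
        then show ?thesis using c X by linarith
      next
        case 3 then have "A \<inter> B = B" by auto
        then show ?thesis using c by simp
      next
        case 4 then have "A \<inter> B = A" by auto
        then show ?thesis using c by simp
      qed
    qed
  next
    assume nc: "\<not> (card (A \<inter> B) < k \<and> k < card (A \<union> B) \<and> card (A \<inter> B) < card A \<and> card (A \<inter> B) < card B)"
    show "\<exists>X. X \<subseteq> S \<and> card X = k \<and> (X \<subseteq> A \<or> A \<subseteq> X) \<and> (X \<subseteq> B \<or> B \<subseteq> X)"
    proof (cases "k \<le> card (A \<inter> B)")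
      case True
      then obtain X where "X \<subseteq> A \<inter> B" "card X = k" using obtain_subset_with_card_n[OF True] by blast
      then show ?thesis using AS by (intro exI[of _ X]) auto
    next
      case F1: False
      show ?thesis
      proof (cases "card (A \<union> B) \<le> k")
        case True
        then obtain X where "A \<union> B \<subseteq> X" "X \<subseteq> S" "card X = k"
          using subset_between[OF fS _ True kS] AS BS by auto
        then show ?thesis by (intro exI[of _ X]) auto
      next
        case F2: False
        have "card A \<le> card (A \<inter> B) \<or> card B \<le> card (A \<inter> B)" using nc F1 F2 by linarith
        then have "A \<subseteq> B \<or> B \<subseteq> A"
        proof
          assume "card A \<le> card (A \<inter> B)"
          then have "A \<inter> B = A" using fA by (intro card_seteq) auto
          then show ?thesis by auto
        next
          assume "card B \<le> card (A \<inter> B)"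
          then have "A \<inter> B = B" using fB by (intro card_seteq) auto
          then show ?thesis by auto
        qed
        then show ?thesis
        proof
          assume AB: "A \<subseteq> B"
          then have "A \<inter> B = A" "A \<union> B = B" by auto
          then have "card A \<le> k" "k \<le> card B" using F1 F2 by auto
          then obtain X where "A \<subseteq> X" "X \<subseteq> B" "card X = k"
            using subset_between[OF fB AB] by auto
          then show ?thesis using BS by (intro exI[of _ X]) auto
        next
          assume AB: "B \<subseteq> A"
          then have "A \<inter> B = B" "A \<union> B = A" by auto
          then have "card B \<le> k" "k \<le> card A" using F1 F2 by auto
          then obtain X where "B \<subseteq> X" "X \<subseteq> A" "card X = k"
            using subset_between[OF fA AB] by auto
          then show ?thesis using AS by (intro exI[of _ X]) auto
        qed
      qed
    qed
  qed
qed

context hb begin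

definition cc :: "nat \<Rightarrow> nat" where
  "cc j = 2 ^ (j - 1) - (if j = k then 1 else 0)"

lemma B_phi:
  assumes "B \<subseteq> P" "B \<noteq> {}"
  shows "B \<in> phi (Bn x n)" "dagger B = B"
proof -
  have ab: "\<And>b. b \<in> B \<Longrightarrow> \<bar>b\<bar> = b" using assms absP by auto
  show "dagger B = B" unfolding dagger_def using ab by force
  have i: "inj_on abs B" by (rule inj_onI) (simp add: ab)
  have s: "B \<subseteq> Bn x n" using assms Bn_eq by blast
  have p: "\<forall>a\<in>B. a > 0" using assms Ppos by blast
  show "B \<in> phi (Bn x n)" using assms i s p unfolding phi_def mem_Collect_eq by blast
qed

lemma V2_phi: "u \<in> V2 x n k \<Longrightarrow> u \<in> phi (Bn x n)" unfolding V2_def by auto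

lemma finV2: "finite (V2 x n k)"
proof -
  have "V2 x n k \<subseteq> Pow (Bn x n)" using phi_props(5) V2_phi by blast
  then show ?thesis using finBn finite_subset by blast
qed

lemma fibre_V2:
  assumes BP: "B \<subseteq> P" and Bne: "B \<noteq> {}"
  shows "card {u \<in> V2 x n k. dagger u = B} = cc (card B)"
proof -
  let ?T = "{u \<in> phi (Bn x n). dagger u = B}"
  have eqV: "u = B" if "u \<in> ?T" "u \<in> V1 x n k" for u
  proof -
    have "u \<subseteq> P" using that unfolding V1_def by auto
    then have "\<And>a. a \<in> u \<Longrightarrow> \<bar>a\<bar> = a" using absP by auto
    then have "dagger u = u" unfolding dagger_def by force
    then show ?thesis using that by auto
  qed
  have "?T \<subseteq> Pow (Bn x n)" using phi_props(5) by blast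
  then have fT: "finite ?T" using finBn finite_subset by blast
  show ?thesis
  proof (cases "card B = k")
    case True
    have BV1: "B \<in> V1 x n k" using True BP unfolding V1_def by auto
    have "{u \<in> V2 x n k. dagger u = B} = ?T - {B}"
    proof (rule set_eqI)
      fix u show "u \<in> {u \<in> V2 x n k. dagger u = B} \<longleftrightarrow> u \<in> ?T - {B}"
        using eqV[of u] BV1 unfolding V2_def by blast
    qed
    moreover have "B \<in> ?T" using B_phi[OF BP Bne] by auto
    ultimately show ?thesis using fibre_phi[OF BP Bne] fT True by (simp add: cc_def)
  next
    case False
    have "u \<notin> V1 x n k" if "u \<in> ?T" for u
    proof -
      have "card u = card B" using that phi_props(4)[of u] by simp
      then show ?thesis using False unfolding V1_def by auto
    qed
    then have "{u \<in> V2 x n k. dagger u = B} = ?T" unfolding V2_def by blast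
    then show ?thesis using fibre_phi[OF BP Bne] False by (simp add: cc_def)
  qed
qed

lemma count_G:
  assumes Q: "\<And>B. Q B \<Longrightarrow> B \<subseteq> P \<and> card B = j" and j1: "j \<ge> 1"
  shows "card {v \<in> V2 x n k. Q (dagger v)} = cc j * card {B. B \<subseteq> P \<and> Q B}"
proof -
  let ?I = "{B. B \<subseteq> P \<and> Q B}"
  have eq: "{v \<in> V2 x n k. Q (dagger v)} = (\<Union>B\<in>?I. {u \<in> V2 x n k. dagger u = B})"
  proof (rule set_eqI)
    fix v
    show "v \<in> {v \<in> V2 x n k. Q (dagger v)} \<longleftrightarrow> v \<in> (\<Union>B\<in>?I. {u \<in> V2 x n k. dagger u = B})"
      using phi_props(2)[OF V2_phi, of v] by blast
  qed
  have "?I \<subseteq> Pow P" by blast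
  then have fI: "finite ?I" using finP finite_subset by blast
  have "card (\<Union>B\<in>?I. {u \<in> V2 x n k. dagger u = B}) = (\<Sum>B\<in>?I. card {u \<in> V2 x n k. dagger u = B})"
  proof (rule card_UN_disjoint)
    show "finite ?I" by (rule fI)
    show "\<forall>i\<in>?I. finite {u \<in> V2 x n k. dagger u = i}" using finV2 by simp
    show "\<forall>i\<in>?I. \<forall>j\<in>?I. i \<noteq> j \<longrightarrow> {u \<in> V2 x n k. dagger u = i} \<inter> {u \<in> V2 x n k. dagger u = j} = {}"
      by blast
  qed
  also have "\<dots> = (\<Sum>B\<in>?I. cc j)"
  proof (rule sum.cong)
    fix B assume "B \<in> ?I"
    then have "B \<subseteq> P" "card B = j" using Q by auto
    moreover then have "B \<noteq> {}" using j1 by auto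
    ultimately show "card {u \<in> V2 x n k. dagger u = B} = cc j" using fibre_V2 by auto
  qed simp
  finally show ?thesis using eq by simp
qed

lemma count_inter:
  assumes AP: "A \<subseteq> P" and cA: "card A = i" and tj: "t \<le> j"
  shows "card {B. B \<subseteq> P \<and> card B = j \<and> card (A \<inter> B) = t} = (i choose t) * ((n - i) choose (j - t))"
proof -
  have fA: "finite A" using AP finP finite_subset by blast
  let ?D = "{C. C \<subseteq> A \<and> card C = t} \<times> {D. D \<subseteq> P - A \<and> card D = j - t}"
  let ?T = "{B. B \<subseteq> P \<and> card B = j \<and> card (A \<inter> B) = t}"
  have inj: "inj_on (\<lambda>(C, D). C \<union> D) ?D"
  proof (rule inj_onI, clarify)
    fix C D C' D'
    assume "C \<subseteq> A" "D \<subseteq> P - A" "C' \<subseteq> A" "D' \<subseteq> P - A" "C \<union> D = C' \<union> D'"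
    then show "C = C' \<and> D = D'" by blast
  qed
  have img: "(\<lambda>(C, D). C \<union> D) ` ?D = ?T"
  proof
    show "(\<lambda>(C, D). C \<union> D) ` ?D \<subseteq> ?T"
    proof clarify
      fix C D assume C: "C \<subseteq> A" "t = card C" and D: "D \<subseteq> P - A" "card D = j - card C"
      have fC: "finite C" using C fA finite_subset by blast
      have fD: "finite D" using D finP finite_subset by blast
      have "card (C \<union> D) = card C + card D" using fC fD C D by (subst card_Un_disjoint) auto
      moreover have "A \<inter> (C \<union> D) = C" using C D by auto
      ultimately show "C \<union> D \<subseteq> P \<and> card (C \<union> D) = j \<and> card (A \<inter> (C \<union> D)) = card C"
        using C D AP tj by auto
    qed
  next
    show "?T \<subseteq> (\<lambda>(C, D). C \<union> D) ` ?D"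
    proof
      fix B assume B: "B \<in> ?T"
      have fB: "finite B" using B finP finite_subset by blast
      have "card (B - A) = card B - card (B \<inter> A)" using fB by (simp add: card_Diff_subset_Int)
      then have "card (B - A) = j - t" using B by (simp add: Int_commute)
      moreover have "B = (A \<inter> B) \<union> (B - A)" by auto
      ultimately show "B \<in> (\<lambda>(C, D). C \<union> D) ` ?D" using B
        by (intro image_eqI[of _ _ "(A \<inter> B, B - A)"]) auto
    qed
  qed
  have "card ?T = card ?D" using card_image[OF inj] img by simp
  also have "\<dots> = (card A choose t) * (card (P - A) choose (j - t))"
    using fA finP by (simp add: card_cartesian_product n_subsets)
  also have "card (P - A) = n - i" using AP fA cA cardP by (simp add: card_Diff_subset)
  finally show ?thesis using cA by simp
qed

end



context hb begin

definition nb :: "real set \<Rightarrow> real set \<Rightarrow> bool" where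
  "nb X u \<longleftrightarrow> X \<subseteq> dagger u \<or> dagger u \<subseteq> X"

lemma V12_disj: "u \<in> V2 x n k \<Longrightarrow> u \<notin> V1 x n k" unfolding V2_def by blast

lemma adj_V2: "HB_adj x n k A B \<Longrightarrow> A \<in> V2 x n k \<Longrightarrow> B \<in> V1 x n k \<and> nb B A"
  unfolding HB_adj_def nb_def using V12_disj by blast

lemma adj_V1: "HB_adj x n k A B \<Longrightarrow> A \<in> V1 x n k \<Longrightarrow> B \<in> V2 x n k \<and> nb A B"
  unfolding HB_adj_def nb_def using V12_disj by blast

lemma walk_parity:
  assumes p0: "p 0 \<in> V2 x n k" and adj: "\<forall>i<m. HB_adj x n k (p i) (p (Suc i))"
  shows "i \<le> m \<Longrightarrow> (even i \<longrightarrow> p i \<in> V2 x n k) \<and> (odd i \<longrightarrow> p i \<in> V1 x n k)"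
proof (induction i)
  case 0 then show ?case using p0 by simp
next
  case (Suc i)
  then have im: "i < m" by simp
  have IH: "(even i \<longrightarrow> p i \<in> V2 x n k) \<and> (odd i \<longrightarrow> p i \<in> V1 x n k)" using Suc by simp
  have a: "HB_adj x n k (p i) (p (Suc i))" using adj im by blast
  show ?case
  proof (cases "even i")
    case True
    then show ?thesis using IH adj_V2[OF a] by simp
  next
    case False
    then show ?thesis using IH adj_V1[OF a] by simp
  qed
qed

abbreviation "HW \<equiv> has_walk (HB_verts x n k) (HB_adj x n k)"

lemma hw_odd:
  assumes "u \<in> V2 x n k" "v \<in> V2 x n k" "odd m"
  shows "\<not> HW u v m"
proof
  assume "HW u v m"
  then obtain p where p: "p 0 = u" "p m = v" "\<forall>i<m. HB_adj x n k (p i) (p (Suc i))"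
    unfolding has_walk_def by blast
  have "p m \<in> V1 x n k" using walk_parity[of p m m] p assms by simp
  then show False using p assms V12_disj by simp
qed

lemma hw_0: "HW u v 0 \<longleftrightarrow> u = v \<and> u \<in> HB_verts x n k"
  unfolding has_walk_def by auto

lemma hw_2:
  assumes u: "u \<in> V2 x n k" and v: "v \<in> V2 x n k"
  shows "HW u v 2 \<longleftrightarrow> (\<exists>X\<in>V1 x n k. nb X u \<and> nb X v)"
proof
  assume "HW u v 2"
  then obtain p where p: "p 0 = u" "p 2 = v" "\<forall>i<2. HB_adj x n k (p i) (p (Suc i))"
    unfolding has_walk_def by blast
  have a0: "HB_adj x n k u (p 1)" using p by force
  have a1: "HB_adj x n k (p 1) v" using p(2) p(3)[rule_format, of 1] by (simp add: numeral_2_eq_2)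
  have X: "p 1 \<in> V1 x n k" "nb (p 1) u" using adj_V2[OF a0 u] by auto
  have "nb (p 1) v" using adj_V1[OF a1 X(1)] by auto
  then show "\<exists>X\<in>V1 x n k. nb X u \<and> nb X v" using X by blast
next
  assume "\<exists>X\<in>V1 x n k. nb X u \<and> nb X v"
  then obtain X where X: "X \<in> V1 x n k" "nb X u" "nb X v" by blast
  define p where "p i = (if i = 0 then u else if i = 1 then X else v)" for i :: nat
  have "p 0 = u" "p 2 = v" by (auto simp: p_def)
  moreover have "\<forall>i\<le>2. p i \<in> HB_verts x n k" using u v X unfolding p_def HB_verts_def by auto
  moreover have "\<forall>i<2. HB_adj x n k (p i) (p (Suc i))"
  proof (intro allI impI)
    fix i :: nat assume "i < 2"
    then have "i = 0 \<or> i = 1" by arith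
    then show "HB_adj x n k (p i) (p (Suc i))"
      using X u v unfolding p_def HB_adj_def nb_def by auto
  qed
  ultimately show "HW u v 2" unfolding has_walk_def by blast
qed

lemma exists_nb:
  assumes u: "u \<in> V2 x n k"
  shows "\<exists>X\<in>V1 x n k. nb X u"
proof -
  have uP: "dagger u \<subseteq> P" using phi_props(2)[OF V2_phi[OF u]] .
  show ?thesis
  proof (cases "k \<le> card (dagger u)")
    case True
    then obtain X where X: "X \<subseteq> dagger u" "card X = k" using obtain_subset_with_card_n[OF True] by blast
    then have "X \<in> V1 x n k" using uP unfolding V1_def by auto
    then show ?thesis using X unfolding nb_def by blast
  next
    case False
    then obtain X where X: "dagger u \<subseteq> X" "X \<subseteq> P" "card X = k"
      using subset_between[OF finP uP, of k] kn cardP by auto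
    then have "X \<in> V1 x n k" unfolding V1_def by auto
    then show ?thesis using X unfolding nb_def by blast
  qed
qed

lemma P_V2: "P \<in> V2 x n k" "dagger P = P"
proof -
  have ne: "P \<noteq> {}" using xnP by blast
  show "dagger P = P" using B_phi[OF subset_refl ne] by simp
  have "P \<notin> V1 x n k" using cardP kn unfolding V1_def by auto
  then show "P \<in> V2 x n k" using B_phi[OF subset_refl ne] unfolding V2_def by blast
qed

lemma hw_4:
  assumes u: "u \<in> V2 x n k" and v: "v \<in> V2 x n k"
  shows "HW u v 4"
proof -
  obtain X where X: "X \<in> V1 x n k" "nb X u" using exists_nb[OF u] by blast
  obtain Y where Y: "Y \<in> V1 x n k" "nb Y v" using exists_nb[OF v] by blast
  have XP: "X \<subseteq> P" "Y \<subseteq> P" using X Y unfolding V1_def by auto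
  define p where "p i = (if i = 0 then u else if i = 1 then X else if i = 2 then P
      else if i = 3 then Y else v)" for i :: nat
  have "p 0 = u" "p 4 = v" by (auto simp: p_def)
  moreover have "\<forall>i\<le>4. p i \<in> HB_verts x n k" using u v X Y P_V2 unfolding p_def HB_verts_def by auto
  moreover have "\<forall>i<4. HB_adj x n k (p i) (p (Suc i))"
  proof (intro allI impI)
    fix i :: nat assume "i < 4"
    then have "i = 0 \<or> i = 1 \<or> i = 2 \<or> i = 3" by arith
    then show "HB_adj x n k (p i) (p (Suc i))"
      using X Y u v XP P_V2 unfolding p_def HB_adj_def nb_def by auto
  qed
  ultimately show "HW u v 4" unfolding has_walk_def by blast
qed

definition cond :: "real set \<Rightarrow> real set \<Rightarrow> bool" where
  "cond A B \<longleftrightarrow> card (A \<inter> B) < k \<and> k < card (A \<union> B) \<and> card (A \<inter> B) < card A \<and> card (A \<inter> B) < card B"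

lemma dist4:
  assumes u: "u \<in> V2 x n k" and v: "v \<in> V2 x n k"
  shows "HB_dist_is x n k u v 4 \<longleftrightarrow> cond (dagger u) (dagger v)"
proof -
  have l: "(\<forall>l<4. \<not> HW u v l) \<longleftrightarrow> \<not> HW u v 0 \<and> \<not> HW u v 1 \<and> \<not> HW u v 2 \<and> \<not> HW u v 3"
  proof
    assume "\<not> HW u v 0 \<and> \<not> HW u v 1 \<and> \<not> HW u v 2 \<and> \<not> HW u v 3"
    then show "\<forall>l<4. \<not> HW u v l"
    proof (intro allI impI)
      fix l :: nat assume "l < 4" and h: "\<not> HW u v 0 \<and> \<not> HW u v 1 \<and> \<not> HW u v 2 \<and> \<not> HW u v 3"
      then have "l = 0 \<or> l = 1 \<or> l = 2 \<or> l = 3" by arith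
      then show "\<not> HW u v l" using h by auto
    qed
  qed auto
  have o1: "\<not> HW u v 1" and o3: "\<not> HW u v 3" using hw_odd[OF u v] by auto
  have e: "HB_dist_is x n k u v 4 \<longleftrightarrow> u \<noteq> v \<and> \<not> (\<exists>X\<in>V1 x n k. nb X u \<and> nb X v)"
    unfolding HB_dist_is_def dist_is_def using l o1 o3 hw_4[OF u v] hw_2[OF u v] hw_0 u
    unfolding HB_verts_def by auto
  have uP: "dagger u \<subseteq> P" and vP: "dagger v \<subseteq> P"
    using phi_props(2) V2_phi u v by auto
  have "(\<exists>X\<in>V1 x n k. nb X u \<and> nb X v) \<longleftrightarrow>
    (\<exists>X. X \<subseteq> P \<and> card X = k \<and> (X \<subseteq> dagger u \<or> dagger u \<subseteq> X) \<and> (X \<subseteq> dagger v \<or> dagger v \<subseteq> X))"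
    unfolding V1_def nb_def by blast
  also have "\<dots> \<longleftrightarrow> \<not> cond (dagger u) (dagger v)"
    unfolding cond_def by (rule comb_nbr[OF finP uP vP]) (use cardP kn in simp)
  finally have c: "(\<exists>X\<in>V1 x n k. nb X u \<and> nb X v) \<longleftrightarrow> \<not> cond (dagger u) (dagger v)" .
  have "cond (dagger u) (dagger v) \<Longrightarrow> u \<noteq> v" unfolding cond_def by auto
  then show ?thesis using e c by blast
qed

end



context hb begin

lemma cond_sym: "cond A B \<longleftrightarrow> cond B A"
proof -
  have "A \<inter> B = B \<inter> A" "A \<union> B = B \<union> A" by auto
  then show ?thesis unfolding cond_def by auto
qed

lemma dag_card: "u \<in> V2 x n k \<Longrightarrow> card (dagger u) = card u"
  using phi_props(4)[OF V2_phi] .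

lemma dag_P: "u \<in> V2 x n k \<Longrightarrow> dagger u \<subseteq> P"
  using phi_props(2)[OF V2_phi] .

lemma dist4_sym: "u \<in> V2 x n k \<Longrightarrow> v \<in> V2 x n k \<Longrightarrow> HB_dist_is x n k u v 4 \<longleftrightarrow> HB_dist_is x n k v u 4"
  using dist4[of u v] dist4[of v u] cond_sym[of "dagger u" "dagger v"] by simp

lemma cond_T:
  assumes AP: "A \<subseteq> P" and BP: "B \<subseteq> P" and cA: "card A = i" and cB: "card B = j" and ij: "i \<le> j"
  shows "cond A B \<longleftrightarrow> card (A \<inter> B) \<in> Tset n k i j"
proof -
  have fA: "finite A" and fB: "finite B" using AP BP finP finite_subset by blast+
  have h1: "card (A \<union> B) + card (A \<inter> B) = i + j" using card_Un_Int[OF fA fB] cA cB by simp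
  have h2: "card (A \<union> B) \<le> n" using card_mono[OF finP] AP BP cardP by (metis Un_subset_iff)
  define t where "t = card (A \<inter> B)"
  define U where "U = card (A \<union> B)"
  have h1': "U + t = i + j" and h2': "U \<le> n" using h1 h2 t_def U_def by auto
  have e1: "cond A B \<longleftrightarrow> t < k \<and> k < U \<and> t < i \<and> t < j" by (simp add: cond_def cA cB t_def U_def)
  have e2: "t \<in> Tset n k i j \<longleftrightarrow> int i + int j - int n \<le> int t \<and> int t < int i + int j - int k \<and> t < i \<and> t < k"
    by (simp add: Tset_def)
  have "t < k \<and> k < U \<and> t < i \<and> t < j \<longleftrightarrow> int i + int j - int n \<le> int t \<and> int t < int i + int j - int k \<and> t < i \<and> t < k"
  proof
    assume a: "t < k \<and> k < U \<and> t < i \<and> t < j"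
    have "int i + int j - int n \<le> int t" using a h1' h2' by linarith
    moreover have "int t < int i + int j - int k" using a h1' by linarith
    ultimately show "int i + int j - int n \<le> int t \<and> int t < int i + int j - int k \<and> t < i \<and> t < k" using a by blast
  next
    assume a: "int i + int j - int n \<le> int t \<and> int t < int i + int j - int k \<and> t < i \<and> t < k"
    have "k < U" using a h1' by linarith
    moreover have "t < j" using a ij by linarith
    ultimately show "t < k \<and> k < U \<and> t < i \<and> t < j" using a by blast
  qed
  then show ?thesis using e1 e2 t_def by simp
qed

lemma finT: "finite (Tset n k i j)"
  by (rule finite_subset[of _ "{..<i}"]) (auto simp: Tset_def)

lemma cardW: "1 \<le> i \<Longrightarrow> card {u \<in> V2 x n k. card (dagger u) = i} = cc i * (n choose i)"
proof -
  assume i1: "1 \<le> i"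
  have e1: "{u \<in> V2 x n k. card (dagger u) = i} = {u \<in> V2 x n k. dagger u \<subseteq> P \<and> card (dagger u) = i}"
    using dag_P by blast
  have e2: "card {u \<in> V2 x n k. dagger u \<subseteq> P \<and> card (dagger u) = i} = cc i * card {B. B \<subseteq> P \<and> (B \<subseteq> P \<and> card B = i)}"
    by (rule count_G[where Q="\<lambda>B. B \<subseteq> P \<and> card B = i" and j=i]) (use i1 in auto)
  have e3: "{B. B \<subseteq> P \<and> (B \<subseteq> P \<and> card B = i)} = {B. B \<subseteq> P \<and> card B = i}" by blast
  show ?thesis using e1 e2 e3 n_subsets[OF finP] cardP by simp
qed

lemma count_B:
  assumes AP: "A \<subseteq> P" and cA: "card A = i" and ij: "i \<le> j"
  shows "card {B. B \<subseteq> P \<and> card B = j \<and> card (A \<inter> B) \<in> Tset n k i j}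
     = (\<Sum>t\<in>Tset n k i j. (i choose t) * ((n - i) choose (j - t)))"
proof -
  let ?T = "Tset n k i j"
  let ?F = "\<lambda>t. {B. B \<subseteq> P \<and> card B = j \<and> card (A \<inter> B) = t}"
  have eq: "{B. B \<subseteq> P \<and> card B = j \<and> card (A \<inter> B) \<in> ?T} = (\<Union>t\<in>?T. ?F t)" by auto
  have "card (\<Union>t\<in>?T. ?F t) = (\<Sum>t\<in>?T. card (?F t))"
  proof (rule card_UN_disjoint)
    show "finite ?T" by (rule finT)
    show "\<forall>t\<in>?T. finite (?F t)"
    proof
      fix t
      have "?F t \<subseteq> Pow P" by blast
      then show "finite (?F t)" using finP by (meson finite_Pow_iff finite_subset)
    qed
    show "\<forall>a\<in>?T. \<forall>b\<in>?T. a \<noteq> b \<longrightarrow> ?F a \<inter> ?F b = {}" by auto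
  qed
  also have "\<dots> = (\<Sum>t\<in>?T. (i choose t) * ((n - i) choose (j - t)))"
  proof (rule sum.cong)
    fix t assume "t \<in> ?T"
    then have "t \<le> j" using ij unfolding Tset_def by auto
    then show "card (?F t) = (i choose t) * ((n - i) choose (j - t))" by (rule count_inter[OF AP cA])
  qed simp
  finally show ?thesis using eq by simp
qed

definition Ord :: "nat \<Rightarrow> nat \<Rightarrow> (real set \<times> real set) set" where
  "Ord i j = {(u, v). u \<in> V2 x n k \<and> v \<in> V2 x n k \<and> card u = i \<and> card v = j \<and> HB_dist_is x n k u v 4}"

lemma card_Ord:
  assumes i1: "1 \<le> i" and ij: "i \<le> j"
  shows "card (Ord i j) = cc i * (n choose i) * (cc j * (\<Sum>t\<in>Tset n k i j. (i choose t) * ((n - i) choose (j - t))))"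
proof -
  let ?T = "Tset n k i j"
  let ?W = "{u \<in> V2 x n k. card (dagger u) = i}"
  let ?G = "\<lambda>u. {v \<in> V2 x n k. card (dagger v) = j \<and> card (dagger u \<inter> dagger v) \<in> ?T}"
  have key: "HB_dist_is x n k u v 4 \<longleftrightarrow> card (dagger u \<inter> dagger v) \<in> ?T"
    if u: "u \<in> V2 x n k" and v: "v \<in> V2 x n k" and cu: "card (dagger u) = i" and cv: "card (dagger v) = j" for u v
  proof -
    have "HB_dist_is x n k u v 4 \<longleftrightarrow> cond (dagger u) (dagger v)" by (rule dist4[OF u v])
    also have "\<dots> \<longleftrightarrow> card (dagger u \<inter> dagger v) \<in> ?T" by (rule cond_T[OF dag_P[OF u] dag_P[OF v] cu cv ij])
    finally show ?thesis .
  qed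
  have eq: "Ord i j = (SIGMA u:?W. ?G u)"
  proof
    show "Ord i j \<subseteq> (SIGMA u:?W. ?G u)"
    proof
      fix p assume p: "p \<in> Ord i j"
      obtain u v where pe: "p = (u, v)" by (cases p)
      have h: "u \<in> V2 x n k" "v \<in> V2 x n k" "card u = i" "card v = j" "HB_dist_is x n k u v 4"
        using p pe unfolding Ord_def by auto
      have c: "card (dagger u) = i" "card (dagger v) = j" using h dag_card by auto
      have "card (dagger u \<inter> dagger v) \<in> ?T" using key[OF h(1) h(2) c] h(5) by blast
      then show "p \<in> (SIGMA u:?W. ?G u)" using pe h c by blast
    qed
  next
    show "(SIGMA u:?W. ?G u) \<subseteq> Ord i j"
    proof
      fix p assume p: "p \<in> (SIGMA u:?W. ?G u)"
      obtain u v where pe: "p = (u, v)" by (cases p)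
      have h: "u \<in> V2 x n k" "v \<in> V2 x n k" "card (dagger u) = i" "card (dagger v) = j"
          "card (dagger u \<inter> dagger v) \<in> ?T"
        using p pe by auto
      have c: "card u = i" "card v = j" using h dag_card by auto
      have "HB_dist_is x n k u v 4" using key[OF h(1-4)] h(5) by blast
      then show "p \<in> Ord i j" using pe h c unfolding Ord_def by blast
    qed
  qed
  have fW: "finite ?W" using finV2 by simp
  have fG: "\<forall>u\<in>?W. finite (?G u)" using finV2 by simp
  have "card (SIGMA u:?W. ?G u) = (\<Sum>u\<in>?W. card (?G u))"
    by (rule card_SigmaI[OF fW fG])
  also have "\<dots> = (\<Sum>u\<in>?W. cc j * (\<Sum>t\<in>?T. (i choose t) * ((n - i) choose (j - t))))"
  proof (rule sum.cong)
    fix u assume u: "u \<in> ?W"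
    have AP: "dagger u \<subseteq> P" using u dag_P by auto
    have cA: "card (dagger u) = i" using u by auto
    have j1: "1 \<le> j" using i1 ij by simp
    have Geq: "?G u = {v \<in> V2 x n k. (\<lambda>B. B \<subseteq> P \<and> card B = j \<and> card (dagger u \<inter> B) \<in> ?T) (dagger v)}"
    proof (rule Collect_cong)
      fix v
      show "(v \<in> V2 x n k \<and> card (dagger v) = j \<and> card (dagger u \<inter> dagger v) \<in> ?T) =
        (v \<in> V2 x n k \<and> (\<lambda>B. B \<subseteq> P \<and> card B = j \<and> card (dagger u \<inter> B) \<in> ?T) (dagger v))"
        using dag_P[of v] by auto
    qed
    have c1: "card {v \<in> V2 x n k. (\<lambda>B. B \<subseteq> P \<and> card B = j \<and> card (dagger u \<inter> B) \<in> ?T) (dagger v)} = cc j * card {B. B \<subseteq> P \<and> (B \<subseteq> P \<and> card B = j \<and> card (dagger u \<inter> B) \<in> ?T)}"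
      by (rule count_G[where Q="\<lambda>B. B \<subseteq> P \<and> card B = j \<and> card (dagger u \<inter> B) \<in> ?T" and j=j]) (use j1 in auto)
    have Beq: "{B. B \<subseteq> P \<and> (B \<subseteq> P \<and> card B = j \<and> card (dagger u \<inter> B) \<in> ?T)}
        = {B. B \<subseteq> P \<and> card B = j \<and> card (dagger u \<inter> B) \<in> ?T}" by auto
    show "card (?G u) = cc j * (\<Sum>t\<in>?T. (i choose t) * ((n - i) choose (j - t)))"
      using Geq c1 Beq count_B[OF AP cA ij] by simp
  qed simp
  also have "\<dots> = card ?W * (cc j * (\<Sum>t\<in>?T. (i choose t) * ((n - i) choose (j - t))))" by simp
  finally show ?thesis using eq cardW[OF i1] by simp
qed

lemma Pset_eq:
  "{{u, v} | u v. u \<in> V2 x n k \<and> v \<in> V2 x n k \<and> card u = i \<and> card v = j \<and> HB_dist_is x n k u v 4}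
    = (\<lambda>(u, v). {u, v}) ` Ord i j"
proof (rule set_eqI)
  fix e
  show "e \<in> {{u, v} | u v. u \<in> V2 x n k \<and> v \<in> V2 x n k \<and> card u = i \<and> card v = j \<and> HB_dist_is x n k u v 4}
    \<longleftrightarrow> e \<in> (\<lambda>(u, v). {u, v}) ` Ord i j"
  proof
    assume "e \<in> {{u, v} | u v. u \<in> V2 x n k \<and> v \<in> V2 x n k \<and> card u = i \<and> card v = j \<and> HB_dist_is x n k u v 4}"
    then obtain u v where "e = {u, v}" "u \<in> V2 x n k" "v \<in> V2 x n k" "card u = i" "card v = j" "HB_dist_is x n k u v 4"
      by blast
    then show "e \<in> (\<lambda>(u, v). {u, v}) ` Ord i j" unfolding Ord_def by (intro image_eqI[of _ _ "(u, v)"]) auto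
  next
    assume "e \<in> (\<lambda>(u, v). {u, v}) ` Ord i j"
    then obtain u v where "(u, v) \<in> Ord i j" "e = {u, v}" by auto
    then show "e \<in> {{u, v} | u v. u \<in> V2 x n k \<and> v \<in> V2 x n k \<and> card u = i \<and> card v = j \<and> HB_dist_is x n k u v 4}"
      unfolding Ord_def by blast
  qed
qed

lemma Ord_cond: "(u, v) \<in> Ord i j \<Longrightarrow> u \<noteq> v \<and> u \<in> V2 x n k \<and> v \<in> V2 x n k \<and> cond (dagger u) (dagger v)"
proof -
  assume a: "(u, v) \<in> Ord i j"
  then have u: "u \<in> V2 x n k" and v: "v \<in> V2 x n k" and d: "HB_dist_is x n k u v 4" unfolding Ord_def by auto
  have c: "cond (dagger u) (dagger v)" using dist4[OF u v] d by simp
  then have "u \<noteq> v" unfolding cond_def by auto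
  then show ?thesis using u v c by simp
qed

lemma Pcount_lt:
  assumes "i < j"
  shows "Pcount x n k i j = card (Ord i j)"
proof -
  have "inj_on (\<lambda>(u, v). {u, v}) (Ord i j)"
  proof (rule inj_onI, clarify)
    fix u v u' v'
    assume a: "(u, v) \<in> Ord i j" "(u', v') \<in> Ord i j" "{u, v} = {u', v'}"
    then have "u = u' \<and> v = v' \<or> u = v' \<and> v = u'" by (simp add: doubleton_eq_iff)
    moreover have "card u = i" "card v' = j" using a unfolding Ord_def by auto
    ultimately show "u = u' \<and> v = v'" using assms by auto
  qed
  then show ?thesis unfolding Pcount_def Pset_eq by (simp add: card_image)
qed

lemma Pcount_eq:
  shows "2 * Pcount x n k i i = card (Ord i i)"
proof -
  let ?g = "\<lambda>(u::real set, v::real set). {u, v}"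
  let ?F = "\<lambda>e. {p \<in> Ord i i. ?g p = e}"
  have "Ord i i \<subseteq> V2 x n k \<times> V2 x n k" unfolding Ord_def by blast
  then have fO: "finite (Ord i i)" using finV2 by (meson finite_SigmaI finite_subset)
  have eq: "Ord i i = (\<Union>e\<in>?g ` Ord i i. ?F e)" by blast
  have "card (\<Union>e\<in>?g ` Ord i i. ?F e) = (\<Sum>e\<in>?g ` Ord i i. card (?F e))"
  proof (rule card_UN_disjoint)
    show "finite (?g ` Ord i i)" using fO by simp
    show "\<forall>e\<in>?g ` Ord i i. finite (?F e)" using fO by simp
    show "\<forall>a\<in>?g ` Ord i i. \<forall>b\<in>?g ` Ord i i. a \<noteq> b \<longrightarrow> ?F a \<inter> ?F b = {}" by blast
  qed
  also have "\<dots> = (\<Sum>e\<in>?g ` Ord i i. 2)"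
  proof (rule sum.cong)
    fix e assume "e \<in> ?g ` Ord i i"
    then obtain u v where uv: "(u, v) \<in> Ord i i" "e = {u, v}" by auto
    have c: "u \<noteq> v" "u \<in> V2 x n k" "v \<in> V2 x n k" using Ord_cond[OF uv(1)] by auto
    have vu: "(v, u) \<in> Ord i i" using uv(1) dist4_sym[OF c(2) c(3)] unfolding Ord_def by auto
    have "?F e = {(u, v), (v, u)}"
    proof
      show "?F e \<subseteq> {(u, v), (v, u)}"
      proof
        fix p assume p: "p \<in> ?F e"
        obtain a b where pe: "p = (a, b)" by (cases p)
        have "{a, b} = {u, v}" using p pe uv(2) by simp
        then have "a = u \<and> b = v \<or> a = v \<and> b = u" by (simp add: doubleton_eq_iff)
        then show "p \<in> {(u, v), (v, u)}" using pe by auto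
      qed
    next
      have "{v, u} = {u, v}" by (rule insert_commute)
      then show "{(u, v), (v, u)} \<subseteq> ?F e" using uv vu by simp
    qed
    then show "card (?F e) = 2" using c by simp
  qed simp
  finally have "card (Ord i i) = 2 * card (?g ` Ord i i)" using eq by simp
  then show ?thesis unfolding Pcount_def Pset_eq by simp
qed

lemma range_lemma:
  assumes u: "u \<in> V2 x n k" and v: "v \<in> V2 x n k" and c: "cond (dagger u) (dagger v)"
  shows "1 \<le> card u \<and> card v \<le> n - 1 \<and> k + 1 \<le> card u + card v \<and> card u + card v \<le> n + k - 1"
proof -
  let ?A = "dagger u" and ?B = "dagger v"
  have AP: "?A \<subseteq> P" and BP: "?B \<subseteq> P" using dag_P u v by auto
  have fA: "finite ?A" and fB: "finite ?B" using AP BP finP finite_subset by blast+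
  have cu: "card ?A = card u" and cv: "card ?B = card v" using dag_card u v by auto
  have h1: "card (?A \<union> ?B) + card (?A \<inter> ?B) = card u + card v" using card_Un_Int[OF fA fB] cu cv by simp
  have h2: "card (?A \<union> ?B) \<le> n" using card_mono[OF finP] AP BP cardP by (metis Un_subset_iff)
  have h3: "card ?B \<le> n" using card_mono[OF finP BP] cardP by simp
  have h4: "card ?B \<noteq> n"
  proof
    assume "card ?B = n"
    then have "?B = P" using card_subset_eq[OF finP BP] cardP by simp
    then have "?A \<inter> ?B = ?A" using AP by auto
    then show False using c unfolding cond_def by simp
  qed
  have c': "card (?A \<inter> ?B) < k" "k < card (?A \<union> ?B)" "card (?A \<inter> ?B) < card ?A" "card (?A \<inter> ?B) < card ?B"
    using c unfolding cond_def by auto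
  have "card ?A \<noteq> 0" using c'(3) by linarith
  then have "1 \<le> card u" using cu by simp
  moreover have "card v \<le> n - 1" using h3 h4 cv by linarith
  moreover have "k + 1 \<le> card u + card v" using c' h1 by linarith
  moreover have "card u + card v \<le> n + k - 1" using c' h1 h2 by linarith
  ultimately show ?thesis by blast
qed

end



context hb begin

lemma finOrd: "finite (Ord i j)"
proof -
  have "Ord i j \<subseteq> V2 x n k \<times> V2 x n k" unfolding Ord_def by blast
  then show ?thesis using finV2 by (meson finite_SigmaI finite_subset)
qed

lemma d4_sum:
  "d4_V2 x n k =
    (\<Sum>(i, j) \<in> {(i, j). 1 \<le> i \<and> i \<le> j \<and> j \<le> n - 1 \<and> k + 1 \<le> i + j \<and> i + j \<le> n + k - 1}.
        Pcount x n k i j)"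
proof -
  let ?Idx = "{(i, j). 1 \<le> i \<and> i \<le> j \<and> j \<le> n - 1 \<and> k + 1 \<le> i + j \<and> i + j \<le> n + k - 1}"
  let ?E = "{{u, v} | u v. u \<in> V2 x n k \<and> v \<in> V2 x n k \<and> HB_dist_is x n k u v 4}"
  let ?Ef = "\<lambda>p. {{u, v} | u v. u \<in> V2 x n k \<and> v \<in> V2 x n k \<and> card u = fst p \<and> card v = snd p \<and> HB_dist_is x n k u v 4}"
  have Ecov: "?E = (\<Union>p\<in>?Idx. ?Ef p)"
  proof
    show "?E \<subseteq> (\<Union>p\<in>?Idx. ?Ef p)"
    proof
      fix e assume "e \<in> ?E"
      then obtain u v where uv: "e = {u, v}" "u \<in> V2 x n k" "v \<in> V2 x n k" "HB_dist_is x n k u v 4" by blast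
      have c: "cond (dagger u) (dagger v)" using dist4[OF uv(2) uv(3)] uv(4) by simp
      show "e \<in> (\<Union>p\<in>?Idx. ?Ef p)"
      proof (cases "card u \<le> card v")
        case True
        have "(card u, card v) \<in> ?Idx" using range_lemma[OF uv(2) uv(3) c] True by simp
        moreover have "e \<in> ?Ef (card u, card v)" using uv by auto
        ultimately show ?thesis by blast
      next
        case False
        have c': "cond (dagger v) (dagger u)" using c cond_sym by blast
        have d': "HB_dist_is x n k v u 4" using uv dist4_sym by blast
        have "(card v, card u) \<in> ?Idx" using range_lemma[OF uv(3) uv(2) c'] False by simp
        moreover have "e = {v, u}" using uv(1) by (simp add: insert_commute)
        then have "e \<in> ?Ef (card v, card u)" using uv d' by auto
        ultimately show ?thesis by blast
      qed
    qed
  next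
    show "(\<Union>p\<in>?Idx. ?Ef p) \<subseteq> ?E" by blast
  qed
  have fIdx: "finite ?Idx"
    by (rule finite_subset[of _ "{..n} \<times> {..n}"]) auto
  have fEf: "\<forall>p\<in>?Idx. finite (?Ef p)"
  proof
    fix p
    have "?Ef p = (\<lambda>(u, v). {u, v}) ` Ord (fst p) (snd p)" by (rule Pset_eq)
    then show "finite (?Ef p)" using finOrd by simp
  qed
  have disj: "\<forall>p\<in>?Idx. \<forall>q\<in>?Idx. p \<noteq> q \<longrightarrow> ?Ef p \<inter> ?Ef q = {}"
  proof (intro ballI impI)
    fix p q assume p: "p \<in> ?Idx" and q: "q \<in> ?Idx" and pq: "p \<noteq> q"
    have Ep: "?Ef p = (\<lambda>(u, v). {u, v}) ` Ord (fst p) (snd p)" by (rule Pset_eq)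
    have Eq: "?Ef q = (\<lambda>(u, v). {u, v}) ` Ord (fst q) (snd q)" by (rule Pset_eq)
    show "?Ef p \<inter> ?Ef q = {}" unfolding Ep Eq
    proof (rule ccontr)
      assume ne: "(\<lambda>(u, v). {u, v}) ` Ord (fst p) (snd p) \<inter> (\<lambda>(u, v). {u, v}) ` Ord (fst q) (snd q) \<noteq> {}"
      obtain e where e12: "e \<in> (\<lambda>(u, v). {u, v}) ` Ord (fst p) (snd p) \<inter> (\<lambda>(u, v). {u, v}) ` Ord (fst q) (snd q)"
        using ne by (meson ex_in_conv)
      have e1: "e \<in> (\<lambda>(u, v). {u, v}) ` Ord (fst p) (snd p)" using e12 by (rule IntD1)
      have e2: "e \<in> (\<lambda>(u, v). {u, v}) ` Ord (fst q) (snd q)" using e12 by (rule IntD2)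
      obtain w where w: "w \<in> Ord (fst p) (snd p)" "e = (\<lambda>(u, v). {u, v}) w" using e1 by blast
      obtain u v where wuv: "w = (u, v)" by (cases w)
      obtain w' where w': "w' \<in> Ord (fst q) (snd q)" "e = (\<lambda>(u, v). {u, v}) w'" using e2 by blast
      obtain u' v' where wuv': "w' = (u', v')" by (cases w')
      have uv: "e = {u, v}" "card u = fst p" "card v = snd p" using w wuv unfolding Ord_def by auto
      have uv': "e = {u', v'}" "card u' = fst q" "card v' = snd q" using w' wuv' unfolding Ord_def by auto
      have o: "fst p \<le> snd p" "fst q \<le> snd q" using p q by auto
      have "{u, v} = {u', v'}" using uv(1) uv'(1) by simp
      then have "u = u' \<and> v = v' \<or> u = v' \<and> v = u'" unfolding doubleton_eq_iff .
      then have "fst p = fst q \<and> snd p = snd q"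
      proof
        assume "u = u' \<and> v = v'"
        then show ?thesis using uv(2,3) uv'(2,3) by simp
      next
        assume "u = v' \<and> v = u'"
        then have "fst p = snd q" "snd p = fst q" using uv(2,3) uv'(2,3) by simp_all
        then show ?thesis using o by linarith
      qed
      then show False using pq by (simp add: prod_eq_iff)
    qed
  qed
  have "card (\<Union>p\<in>?Idx. ?Ef p) = (\<Sum>p\<in>?Idx. card (?Ef p))"
    by (rule card_UN_disjoint[OF fIdx fEf disj])
  also have "\<dots> = (\<Sum>(i, j) \<in> ?Idx. Pcount x n k i j)"
  proof (rule sum.cong)
    fix p assume "p \<in> ?Idx"
    obtain i j where pe: "p = (i, j)" by (cases p)
    show "card (?Ef p) = (case p of (i, j) \<Rightarrow> Pcount x n k i j)" unfolding pe Pcount_def by simp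
  qed simp
  finally show ?thesis unfolding d4_V2_def using Ecov by simp
qed

lemma real_cc: "real (cc j) = (if j = k then 2 ^ (j - 1) - 1 else 2 ^ (j - 1))"
proof (cases "j = k")
  case True
  have "(1::nat) \<le> 2 ^ (j - 1)" by simp
  then show ?thesis using True by (simp add: cc_def of_nat_diff)
next
  case False then show ?thesis by (simp add: cc_def)
qed

lemma sum_pull: "(\<Sum>t\<in>T. (a::real) * f t * g t) = a * (\<Sum>t\<in>T. f t * g t)"
  by (simp add: sum_distrib_left mult.assoc)

abbreviation SS :: "nat \<Rightarrow> nat \<Rightarrow> real" where
  "SS i j \<equiv> (\<Sum>t\<in>Tset n k i j. real ((n - i) choose (j - t)) * real (i choose t))"

lemma Pc_lt_real:
  assumes "1 \<le> i" "i < j"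
  shows "real (Pcount x n k i j) = real (n choose i) * real (cc i) * real (cc j) * SS i j"
proof -
  have "Pcount x n k i j = cc i * (n choose i) * (cc j * (\<Sum>t\<in>Tset n k i j. (i choose t) * ((n - i) choose (j - t))))"
    using Pcount_lt[OF assms(2)] card_Ord[OF assms(1)] assms(2) by simp
  then have "real (Pcount x n k i j) = real (cc i) * real (n choose i) * (real (cc j) * (\<Sum>t\<in>Tset n k i j. real (i choose t) * real ((n - i) choose (j - t))))"
    by (simp add: of_nat_sum)
  then show ?thesis by (simp add: mult_ac)
qed

lemma Pc_eq_real:
  assumes "1 \<le> i"
  shows "real (Pcount x n k i i) = (1 / 2) * (real (n choose i) * real (cc i) * real (cc i) * SS i i)"
proof -
  have "2 * Pcount x n k i i = cc i * (n choose i) * (cc i * (\<Sum>t\<in>Tset n k i i. (i choose t) * ((n - i) choose (i - t))))"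
    using Pcount_eq card_Ord[OF assms(1)] by simp
  then have "2 * real (Pcount x n k i i) = real (cc i) * real (n choose i) * (real (cc i) * (\<Sum>t\<in>Tset n k i i. real (i choose t) * real ((n - i) choose (i - t))))"
    by (metis (mono_tags, lifting) of_nat_mult of_nat_sum of_nat_numeral sum.cong)
  then show ?thesis by (simp add: mult_ac)
qed

lemma case1:
  assumes "1 \<le> i" "i < j" "i \<noteq> k" "j \<noteq> k"
  shows "real (Pcount x n k i j) = (\<Sum>t\<in>Tset n k i j.
               real (n choose i) * 2 ^ (i - 1) * 2 ^ (j - 1) * real ((n - i) choose (j - t)) * real (i choose t))"
  using Pc_lt_real[OF assms(1,2)] assms by (simp add: real_cc sum_pull)

lemma case2:
  assumes "k < j"
  shows "real (Pcount x n k k j) = (\<Sum>t\<in>Tset n k k j.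
               real (n choose k) * (2 ^ (k - 1) - 1) * 2 ^ (j - 1) * real ((n - k) choose (j - t)) * real (k choose t))"
  using Pc_lt_real[of k j] assms k1 by (simp add: real_cc sum_pull)

lemma case3:
  assumes "1 \<le> i" "i < k"
  shows "real (Pcount x n k i k) = (\<Sum>t\<in>Tset n k i k.
               real (n choose i) * 2 ^ (i - 1) * (2 ^ (k - 1) - 1) * real ((n - i) choose (k - t)) * real (i choose t))"
  using Pc_lt_real[of i k] assms by (simp add: real_cc sum_pull)

lemma case4:
  shows "real (Pcount x n k k k) = (1 / 2) * (\<Sum>t\<in>Tset n k k k.
               real (n choose k) * (2 ^ (k - 1) - 1) ^ 2 * real ((n - k) choose (k - t)) * real (k choose t))"
proof -
  have e: "(\<Sum>t\<in>Tset n k k k. real (n choose k) * (2 ^ (k - 1) - 1) ^ 2 * real ((n - k) choose (k - t)) * real (k choose t))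
    = real (n choose k) * (2 ^ (k - 1) - 1) ^ 2 * SS k k" by (rule sum_pull)
  show ?thesis unfolding e using Pc_eq_real[of k] k1 by (simp add: real_cc power2_eq_square mult_ac)
qed

lemma case5:
  assumes "1 \<le> i" "i \<noteq> k"
  shows "real (Pcount x n k i i) = (1 / 2) * (\<Sum>t\<in>Tset n k i i.
               real (n choose i) * 2 ^ (2 * (i - 1)) * real ((n - i) choose (i - t)) * real (i choose t))"
proof -
  have e: "(\<Sum>t\<in>Tset n k i i. real (n choose i) * 2 ^ (2 * (i - 1)) * real ((n - i) choose (i - t)) * real (i choose t))
    = real (n choose i) * 2 ^ (2 * (i - 1)) * SS i i" by (rule sum_pull)
  have p: "(2::real) ^ (2 * (i - 1)) = 2 ^ (i - 1) * 2 ^ (i - 1)" by (simp add: mult_2 power_add)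
  show ?thesis unfolding e unfolding p using Pc_eq_real[OF assms(1)] assms by (simp add: real_cc mult_ac)
qed

end

theorem mainTheorem16:
  fixes x :: "nat \<Rightarrow> real" and n k :: nat
  assumes "n > 2" and "1 < k" and "k < n"
    and "\<forall>i. 1 \<le> i \<and> i \<le> n \<longrightarrow> 0 < x i"
    and "\<forall>i j. 1 \<le> i \<and> i < j \<and> j \<le> n \<longrightarrow> x i < x j"
  shows "d4_V2 x n k =
           (\<Sum>(i, j) \<in> {(i, j). 1 \<le> i \<and> i \<le> j \<and> j \<le> n - 1 \<and> k + 1 \<le> i + j \<and> i + j \<le> n + k - 1}.
              Pcount x n k i j)
    \<and> (\<forall>i j. 1 \<le> i \<and> i \<le> j \<and> j \<le> n - 1 \<and> k + 1 \<le> i + j \<and> i + j \<le> n + k - 1 \<longrightarrow>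
         (i \<noteq> k \<and> j \<noteq> k \<and> i < j \<longrightarrow>
            real (Pcount x n k i j) = (\<Sum>t\<in>Tset n k i j.
               real (n choose i) * 2 ^ (i - 1) * 2 ^ (j - 1) * real ((n - i) choose (j - t)) * real (i choose t)))
       \<and> (i = k \<and> k < j \<longrightarrow>
            real (Pcount x n k i j) = (\<Sum>t\<in>Tset n k i j.
               real (n choose k) * (2 ^ (k - 1) - 1) * 2 ^ (j - 1) * real ((n - k) choose (j - t)) * real (k choose t)))
       \<and> (i < j \<and> j = k \<longrightarrow>
            real (Pcount x n k i j) = (\<Sum>t\<in>Tset n k i j.
               real (n choose i) * 2 ^ (i - 1) * (2 ^ (k - 1) - 1) * real ((n - i) choose (k - t)) * real (i choose t)))
       \<and> (i = k \<and> j = k \<longrightarrow>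
            real (Pcount x n k i j) = (1 / 2) * (\<Sum>t\<in>Tset n k i j.
               real (n choose k) * (2 ^ (k - 1) - 1) ^ 2 * real ((n - k) choose (k - t)) * real (k choose t)))
       \<and> (i = j \<and> i \<noteq> k \<longrightarrow>
            real (Pcount x n k i j) = (1 / 2) * (\<Sum>t\<in>Tset n k i j.
               real (n choose i) * 2 ^ (2 * (i - 1)) * real ((n - i) choose (i - t)) * real (i choose t))))"
proof -
  interpret hb x n k by (unfold_locales) (use assms in auto)
  show ?thesis
  proof (intro conjI allI impI)
    show "d4_V2 x n k =
           (\<Sum>(i, j) \<in> {(i, j). 1 \<le> i \<and> i \<le> j \<and> j \<le> n - 1 \<and> k + 1 \<le> i + j \<and> i + j \<le> n + k - 1}.
              Pcount x n k i j)" by (rule d4_sum)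
  next
    fix i j assume r: "1 \<le> i \<and> i \<le> j \<and> j \<le> n - 1 \<and> k + 1 \<le> i + j \<and> i + j \<le> n + k - 1"
    {
      assume c: "i \<noteq> k \<and> j \<noteq> k \<and> i < j"
      show "real (Pcount x n k i j) = (\<Sum>t\<in>Tset n k i j.
               real (n choose i) * 2 ^ (i - 1) * 2 ^ (j - 1) * real ((n - i) choose (j - t)) * real (i choose t))"
        using case1 r c by blast
    next
      assume c: "i = k \<and> k < j"
      then have ik: "i = k" by simp
      show "real (Pcount x n k i j) = (\<Sum>t\<in>Tset n k i j.
               real (n choose k) * (2 ^ (k - 1) - 1) * 2 ^ (j - 1) * real ((n - k) choose (j - t)) * real (k choose t))"
        unfolding ik using case2 c by blast
    next
      assume c: "i < j \<and> j = k"
      then have jk: "j = k" by simp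
      show "real (Pcount x n k i j) = (\<Sum>t\<in>Tset n k i j.
               real (n choose i) * 2 ^ (i - 1) * (2 ^ (k - 1) - 1) * real ((n - i) choose (k - t)) * real (i choose t))"
        unfolding jk using case3 r c by blast
    next
      assume c: "i = k \<and> j = k"
      then have ik: "i = k" and jk: "j = k" by simp_all
      show "real (Pcount x n k i j) = (1 / 2) * (\<Sum>t\<in>Tset n k i j.
               real (n choose k) * (2 ^ (k - 1) - 1) ^ 2 * real ((n - k) choose (k - t)) * real (k choose t))"
        unfolding ik jk by (rule case4)
    next
      assume c: "i = j \<and> i \<noteq> k"
      then have ij: "j = i" by simp
      show "real (Pcount x n k i j) = (1 / 2) * (\<Sum>t\<in>Tset n k i j.
               real (n choose i) * 2 ^ (2 * (i - 1)) * real ((n - i) choose (i - t)) * real (i choose t))"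
        unfolding ij using case5 r c by blast
    }
  qed
qed


end
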